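(* Let $S=(G,-1,q)$ and $S'=(G',-1',q')$ be quaternionic structures. Then (a) $B(S\times S')\cong B(S)\times B(S')$, and (b) $B(S\Delta)\cong B(S)\times G$ as groups.
   Context: A quaternionic structure is a triple $S=(G,-1,q)$ where $G$ is a multiplicative group in which every element is its own inverse, $-1\in G$ is a distinguished element (possibly $-1=1$), $-a:=(-1)a$, and $q:G\times G\to Q$ is a surjective map onto a set $Q$ with distinguished element $0$, such that for all $a,b,c,d\in G$: (Q1) $q(a,-a)=0$; (Q2) $q(a,b)=q(b,a)$; (Q3) $q(a,b)=q(a,c)\iff q(a,bc)=0$; (Q4) $q(a,b)=q(c,d)\iff$ there is $x\in G$ with $q(a,b)=q(a,x)=q(c,x)=q(c,d)$. The abstract 2-Brauer group $B(S)$ is the abelian group, with operation $\ast$, generated by $Q$ subject only to the relations $q(a,b)\ast q(a,c)=q(a,bc)$ for all $a,b,c\in G$. Direct product: for $S_i=(G_i,e_i,q_i)$, $S_1\times S_2=(G_1\times G_2,(e_1,e_2),q_1\times q_2)$ with $(q_1\times q_2)((a_1,a_2),(b_1,b_2))=(q_1(a_1,b_1),q_2(a_2,b_2))$, quaternion set $Q_1\times Q_2$ and zero $(0,0)$. Group extension: $S\Delta=S[x]=(G\times\{1,x\},-1,q_x)$ where $\{1,x\}$ is cyclic of order $2$ (inner direct product notation) and $q_x(ax^\alpha,bx^\beta)=(q(a,b),(-1)^{\alpha\beta}a^\beta b^\alpha)\in Q\times G$ for $a,b\in G$, $\alpha,\beta\in\{0,1\}$, with zero quaternion $(0,1)$ and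 quaternion set the image of $q_x$. Both constructions yield quaternionic structures. *)

theory Defs
  imports "HOL-Algebra.Algebra" "HOL-Algebra.Free_Abelian_Groups"
begin

text \<open>A quaternionic structure (G, -1, q) with zero quaternion z.  The group G is a
  HOL-Algebra group; the quaternion set Q is the image of q on carrier G x carrier G
  (so q is surjective onto Q by construction).\<close>

definition qset :: "('a, 'm) monoid_scheme \<Rightarrow> ('a \<Rightarrow> 'a \<Rightarrow> 'q) \<Rightarrow> 'q set" where
  "qset G q = (\<lambda>(a, b). q a b) ` (carrier G \<times> carrier G)"

definition quaternionic_structure ::
  "('a, 'm) monoid_scheme \<Rightarrow> 'a \<Rightarrow> ('a \<Rightarrow> 'a \<Rightarrow> 'q) \<Rightarrow> 'q \<Rightarrow> bool" where
  "quaternionic_structure G m q z \<longleftrightarrow>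
     group G \<and> (\<forall>a\<in>carrier G. a \<otimes>\<^bsub>G\<^esub> a = \<one>\<^bsub>G\<^esub>) \<and> m \<in> carrier G \<and> z \<in> qset G q \<and>
     (\<forall>a\<in>carrier G. q a (m \<otimes>\<^bsub>G\<^esub> a) = z) \<and>
     (\<forall>a\<in>carrier G. \<forall>b\<in>carrier G. q a b = q b a) \<and>
     (\<forall>a\<in>carrier G. \<forall>b\<in>carrier G. \<forall>c\<in>carrier G.
        q a b = q a c \<longleftrightarrow> q a (b \<otimes>\<^bsub>G\<^esub> c) = z) \<and>
     (\<forall>a\<in>carrier G. \<forall>b\<in>carrier G. \<forall>c\<in>carrier G. \<forall>d\<in>carrier G.
        q a b = q c d \<longleftrightarrow>
        (\<exists>x\<in>carrier G. q a b = q a x \<and> q a x = q c x \<and> q c x = q c d))"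

definition brauer_rels :: "('a, 'm) monoid_scheme \<Rightarrow> ('a \<Rightarrow> 'a \<Rightarrow> 'q) \<Rightarrow> ('q \<Rightarrow>\<^sub>0 int) set" where
  "brauer_rels G q = {Poly_Mapping.single (q a b) 1 + Poly_Mapping.single (q a c) 1
                        - Poly_Mapping.single (q a (b \<otimes>\<^bsub>G\<^esub> c)) 1
                      | a b c. a \<in> carrier G \<and> b \<in> carrier G \<and> c \<in> carrier G}"

definition brauer :: "('a, 'm) monoid_scheme \<Rightarrow> ('a \<Rightarrow> 'a \<Rightarrow> 'q) \<Rightarrow> ('q \<Rightarrow>\<^sub>0 int) set monoid" where
  "brauer G q = free_Abelian_group (qset G q) Mod
                  generate (free_Abelian_group (qset G q)) (brauer_rels G q)"

definition qprod_map :: "('a \<Rightarrow> 'a \<Rightarrow> 'q) \<Rightarrow> ('b \<Rightarrow> 'b \<Rightarrow> 'r) \<Rightarrow>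
    ('a \<times> 'b) \<Rightarrow> ('a \<times> 'b) \<Rightarrow> 'q \<times> 'r" where
  "qprod_map q q' = (\<lambda>(a1, a2) (b1, b2). (q a1 b1, q' a2 b2))"

text \<open>The cyclic group of order 2 {1, x}, with True representing x.\<close>

definition C2 :: "bool monoid" where
  "C2 = \<lparr>carrier = UNIV, monoid.mult = (\<noteq>), one = False\<rparr>"

definition qext_map :: "('a, 'm) monoid_scheme \<Rightarrow> 'a \<Rightarrow> ('a \<Rightarrow> 'a \<Rightarrow> 'q) \<Rightarrow>
    ('a \<times> bool) \<Rightarrow> ('a \<times> bool) \<Rightarrow> 'q \<times> 'a" where
  "qext_map G m q = (\<lambda>(a, al) (b, be).
      (q a b, (if al \<and> be then m else \<one>\<^bsub>G\<^esub>) \<otimes>\<^bsub>G\<^esub>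
              ((if be then a else \<one>\<^bsub>G\<^esub>) \<otimes>\<^bsub>G\<^esub> (if al then b else \<one>\<^bsub>G\<^esub>))))"

end

theory Submission
  imports Defs
begin


abbreviation FQ :: "('a, 'm) monoid_scheme \<Rightarrow> ('a \<Rightarrow> 'a \<Rightarrow> 'q) \<Rightarrow> ('q \<Rightarrow>\<^sub>0 int) monoid" where
  "FQ G q \<equiv> free_Abelian_group (qset G q)"
abbreviation NB where "NB G q \<equiv> generate (FQ G q) (brauer_rels G q)"
abbreviation pr where "pr G q x \<equiv> r_coset (FQ G q) (NB G q) x"

lemma qset_mem: "a \<in> carrier G \<Longrightarrow> b \<in> carrier G \<Longrightarrow> q a b \<in> qset G q"
  by (auto simp: qset_def)

lemma rels_sub:
  assumes "monoid G" shows "brauer_rels G q \<subseteq> carrier (FQ G q)"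
proof
  fix r assume "r \<in> brauer_rels G q"
  then obtain a b c where abc: "a \<in> carrier G" "b \<in> carrier G" "c \<in> carrier G"
    and r: "r = frag_of (q a b) + frag_of (q a c) - frag_of (q a (b \<otimes>\<^bsub>G\<^esub> c))"
    by (auto simp: brauer_rels_def)
  have "q a (b \<otimes>\<^bsub>G\<^esub> c) \<in> qset G q" using abc assms by (simp add: qset_mem monoid.m_closed)
  moreover have "q a b \<in> qset G q" "q a c \<in> qset G q" using abc by (auto simp: qset_mem)
  ultimately show "r \<in> carrier (FQ G q)" unfolding r
    by (meson carrier_free_Abelian_group_iff keys_add keys_diff frag_of_in_free_Abelian_group le_sup_iff order_trans)
qed

lemma NB_subgroup: "monoid G \<Longrightarrow> subgroup (NB G q) (FQ G q)"
  by (simp add: group.generate_is_subgroup rels_sub)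

lemma NB_normal: "monoid G \<Longrightarrow> NB G q \<lhd> FQ G q"
  by (simp add: NB_subgroup abelian_free_Abelian_group comm_group.normal_iff_subgroup)

lemma brauer_comm: "monoid G \<Longrightarrow> comm_group (brauer G q)"
  unfolding brauer_def by (simp add: NB_subgroup abelian_free_Abelian_group comm_group.abelian_FactGroup)

lemma pr_hom: "monoid G \<Longrightarrow> pr G q \<in> hom (FQ G q) (brauer G q)"
  unfolding brauer_def using normal.r_coset_hom_Mod[OF NB_normal] by blast

lemma carrier_brauer: "carrier (brauer G q) = pr G q ` carrier (FQ G q)"
  unfolding brauer_def by (simp add: carrier_FactGroup)

lemma one_brauer: "\<one>\<^bsub>brauer G q\<^esub> = NB G q"
  unfolding brauer_def by simp

lemma pr_one_iff:
  assumes "monoid G" "x \<in> carrier (FQ G q)"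
  shows "pr G q x = \<one>\<^bsub>brauer G q\<^esub> \<longleftrightarrow> x \<in> NB G q"
proof
  assume "pr G q x = \<one>\<^bsub>brauer G q\<^esub>"
  then show "x \<in> NB G q" unfolding one_brauer
    by (metis assms NB_subgroup group.rcos_self group_free_Abelian_group)
next
  assume "x \<in> NB G q" then show "pr G q x = \<one>\<^bsub>brauer G q\<^esub>" unfolding one_brauer
    by (metis assms NB_subgroup group.coset_join2 group_free_Abelian_group)
qed

lemma minus_as_mult:
  assumes "Poly_Mapping.keys x \<subseteq> Y" "Poly_Mapping.keys y \<subseteq> Y"
  shows "x - y = x \<otimes>\<^bsub>free_Abelian_group Y\<^esub> m_inv (free_Abelian_group Y) y"
  using assms by simp

lemma hom_diff_free:
  assumes "group K" "h \<in> hom (free_Abelian_group Y) K"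
    "Poly_Mapping.keys x \<subseteq> Y" "Poly_Mapping.keys y \<subseteq> Y"
  shows "h (x - y) = h x \<otimes>\<^bsub>K\<^esub> m_inv K (h y)"
proof -
  interpret group_hom "free_Abelian_group Y" K h
    using assms by (simp add: group_hom_def group_hom_axioms_def)
  show ?thesis using assms minus_as_mult by (metis carrier_free_Abelian_group_iff hom_inv hom_mult G.inv_closed)
qed

lemma hom_free_ext:
  assumes "group K" "h1 \<in> hom (free_Abelian_group Y) K" "h2 \<in> hom (free_Abelian_group Y) K"
    "\<And>x. x \<in> Y \<Longrightarrow> h1 (frag_of x) = h2 (frag_of x)"
    "u \<in> carrier (free_Abelian_group Y)"
  shows "h1 u = h2 u"
proof -
  show ?thesis
  proof (rule free_Abelian_group_induct[of u Y "\<lambda>u. h1 u = h2 u"])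
    show "Poly_Mapping.keys u \<subseteq> Y" using assms by simp
  next
    show "h1 0 = h2 0" using assms
      by (metis group_free_Abelian_group group_hom.hom_one group_hom_axioms_def group_hom_def one_free_Abelian_group)
  next
    fix x y assume "Poly_Mapping.keys x \<subseteq> Y" "Poly_Mapping.keys y \<subseteq> Y" "h1 x = h2 x" "h1 y = h2 y"
    then show "h1 (x - y) = h2 (x - y)" using hom_diff_free[OF assms(1,2)] hom_diff_free[OF assms(1,3)] by simp
  next
    fix a assume "a \<in> Y" then show "h1 (frag_of a) = h2 (frag_of a)" using assms by simp
  qed
qed

lemma kill_rel:
  assumes "group K" "h \<in> hom (free_Abelian_group Y) K"
    "x \<in> Y" "y \<in> Y" "w \<in> Y" "h (frag_of x) \<otimes>\<^bsub>K\<^esub> h (frag_of y) = h (frag_of w)"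
  shows "h (frag_of x + frag_of y - frag_of w) = \<one>\<^bsub>K\<^esub>"
proof -
  have c: "h (frag_of x) \<in> carrier K" "h (frag_of y) \<in> carrier K" "h (frag_of w) \<in> carrier K"
    using assms hom_in_carrier by (metis frag_of_in_free_Abelian_group)+
  have k: "Poly_Mapping.keys (frag_of x + frag_of y) \<subseteq> Y"
    using assms by (metis carrier_free_Abelian_group_iff frag_of_in_free_Abelian_group keys_add le_sup_iff order_trans)
  have "h (frag_of x + frag_of y - frag_of w) = h (frag_of x + frag_of y) \<otimes>\<^bsub>K\<^esub> m_inv K (h (frag_of w))"
    using hom_diff_free[OF assms(1,2) k] assms by simp
  also have "h (frag_of x + frag_of y) = h (frag_of x) \<otimes>\<^bsub>K\<^esub> h (frag_of y)"
    using assms hom_mult[OF assms(2), of "frag_of x" "frag_of y"] by simp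
  finally show ?thesis using assms c by (simp add: group.r_inv)
qed

lemma brauer_rel:
  assumes "monoid G" "a \<in> carrier G" "b \<in> carrier G" "c \<in> carrier G"
  shows "pr G q (frag_of (q a b)) \<otimes>\<^bsub>brauer G q\<^esub> pr G q (frag_of (q a c))
       = pr G q (frag_of (q a (b \<otimes>\<^bsub>G\<^esub> c)))"
proof -
  let ?x = "frag_of (q a b)" and ?y = "frag_of (q a c)" and ?w = "frag_of (q a (b \<otimes>\<^bsub>G\<^esub> c))"
  have m: "q a b \<in> qset G q" "q a c \<in> qset G q" "q a (b \<otimes>\<^bsub>G\<^esub> c) \<in> qset G q"
    using assms by (auto simp: qset_mem monoid.m_closed)
  have r: "?x + ?y - ?w \<in> NB G q"
    by (rule generate.incl) (use assms in \<open>auto simp: brauer_rels_def\<close>)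
  have rc: "?x + ?y - ?w \<in> carrier (FQ G q)" using r rels_sub[OF assms(1)]
    by (meson group.generate_incl group_free_Abelian_group subsetD)
  have h: "pr G q \<in> hom (FQ G q) (brauer G q)" by (rule pr_hom[OF assms(1)])
  have "pr G q ?x \<otimes>\<^bsub>brauer G q\<^esub> pr G q ?y = pr G q (?x + ?y)"
    using hom_mult[OF h, of ?x ?y] m by simp
  also have "?x + ?y = (?x + ?y - ?w) \<otimes>\<^bsub>FQ G q\<^esub> ?w" by simp
  also have "pr G q \<dots> = pr G q (?x + ?y - ?w) \<otimes>\<^bsub>brauer G q\<^esub> pr G q ?w"
    using hom_mult[OF h, of "?x + ?y - ?w" ?w] rc m by simp
  also have "pr G q (?x + ?y - ?w) = \<one>\<^bsub>brauer G q\<^esub>" using pr_one_iff[OF assms(1) rc] r by simp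
  finally show ?thesis using m h hom_in_carrier brauer_comm[OF assms(1)]
    by (metis comm_group_def group.is_monoid monoid.l_one frag_of_in_free_Abelian_group)
qed

lemma induced:
  assumes "monoid G" "group K" "h \<in> hom (FQ G q) K"
    and rel: "\<And>a b c. a \<in> carrier G \<Longrightarrow> b \<in> carrier G \<Longrightarrow> c \<in> carrier G \<Longrightarrow>
       h (frag_of (q a b)) \<otimes>\<^bsub>K\<^esub> h (frag_of (q a c)) = h (frag_of (q a (b \<otimes>\<^bsub>G\<^esub> c)))"
  obtains g where "g \<in> hom (brauer G q) K" "\<And>x. x \<in> carrier (FQ G q) \<Longrightarrow> g (pr G q x) = h x"
proof -
  interpret group_hom "FQ G q" K h
    using assms by (simp add: group_hom_def group_hom_axioms_def)
  have "brauer_rels G q \<subseteq> kernel (FQ G q) K h"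
  proof
    fix r assume rr: "r \<in> brauer_rels G q"
    then obtain a b c where abc: "a \<in> carrier G" "b \<in> carrier G" "c \<in> carrier G"
      and r: "r = frag_of (q a b) + frag_of (q a c) - frag_of (q a (b \<otimes>\<^bsub>G\<^esub> c))"
      by (auto simp: brauer_rels_def)
    have "h r = \<one>\<^bsub>K\<^esub>" unfolding r
      by (rule kill_rel[OF assms(2,3)]) (use abc assms(1) rel in \<open>auto simp: qset_mem monoid.m_closed\<close>)
    then show "r \<in> kernel (FQ G q) K h" using rr rels_sub[OF assms(1)] unfolding kernel_def by blast
  qed
  then have "NB G q \<subseteq> kernel (FQ G q) K h"
    by (simp add: G.generate_subgroup_incl subgroup_kernel)
  then show ?thesis using FactGroup_universal_kernel[OF NB_normal[OF assms(1)]] that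
    unfolding brauer_def by metis
qed

lemma cg_group: "comm_group A \<Longrightarrow> group A"
  by (simp add: comm_group_def)

lemma pres_iso:
  assumes "monoid G" "group H" "\<Phi> \<in> hom (FQ G q) H"
    and rel: "\<And>a b c. a \<in> carrier G \<Longrightarrow> b \<in> carrier G \<Longrightarrow> c \<in> carrier G \<Longrightarrow>
       \<Phi> (frag_of (q a b)) \<otimes>\<^bsub>H\<^esub> \<Phi> (frag_of (q a c)) = \<Phi> (frag_of (q a (b \<otimes>\<^bsub>G\<^esub> c)))"
    and surj: "\<Phi> ` carrier (FQ G q) = carrier H"
    and th: "\<Theta> \<in> hom H (brauer G q)"
    and inv: "\<And>x. x \<in> qset G q \<Longrightarrow> \<Theta> (\<Phi> (frag_of x)) = pr G q (frag_of x)"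
  shows "brauer G q \<cong> H"
proof -
  interpret group_hom "FQ G q" H \<Phi>
    using assms by (simp add: group_hom_def group_hom_axioms_def)
  have gB: "group (brauer G q)" using cg_group[OF brauer_comm[OF assms(1)]] .
  have "brauer_rels G q \<subseteq> kernel (FQ G q) H \<Phi>"
  proof
    fix r assume rr: "r \<in> brauer_rels G q"
    then obtain a b c where abc: "a \<in> carrier G" "b \<in> carrier G" "c \<in> carrier G"
      and r: "r = frag_of (q a b) + frag_of (q a c) - frag_of (q a (b \<otimes>\<^bsub>G\<^esub> c))"
      by (auto simp: brauer_rels_def)
    have "\<Phi> r = \<one>\<^bsub>H\<^esub>" unfolding r
      by (rule kill_rel[OF assms(2,3)]) (use abc assms(1) rel in \<open>auto simp: qset_mem monoid.m_closed\<close>)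
    then show "r \<in> kernel (FQ G q) H \<Phi>" using rr rels_sub[OF assms(1)] unfolding kernel_def by blast
  qed
  then have sub1: "NB G q \<subseteq> kernel (FQ G q) H \<Phi>"
    by (simp add: G.generate_subgroup_incl subgroup_kernel)
  have comp: "(\<lambda>x. \<Theta> (\<Phi> x)) \<in> hom (FQ G q) (brauer G q)"
    using Group.hom_compose[OF homh th] by (simp add: comp_def)
  have eq: "\<Theta> (\<Phi> x) = pr G q x" if "x \<in> carrier (FQ G q)" for x
    by (rule hom_free_ext[OF gB comp pr_hom[OF assms(1)] _ that]) (simp add: inv)
  have sub2: "kernel (FQ G q) H \<Phi> \<subseteq> NB G q"
  proof
    fix x assume "x \<in> kernel (FQ G q) H \<Phi>"
    then have x: "x \<in> carrier (FQ G q)" "\<Phi> x = \<one>\<^bsub>H\<^esub>" by (auto simp: kernel_def)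
    then have "pr G q x = \<Theta> \<one>\<^bsub>H\<^esub>" using eq by metis
    also have "\<dots> = \<one>\<^bsub>brauer G q\<^esub>"
      using th gB assms(2) by (simp add: group_hom.hom_one group_hom_axioms_def group_hom_def)
    finally show "x \<in> NB G q" using pr_one_iff[OF assms(1) x(1)] by simp
  qed
  have "FQ G q Mod kernel (FQ G q) H \<Phi> \<cong> H" by (rule FactGroup_iso[OF surj])
  then show ?thesis unfolding brauer_def using sub1 sub2 by (metis subset_antisym)
qed


lemma comm_DirProd:
  assumes "comm_group A" "comm_group B" shows "comm_group (A \<times>\<times> B)"
proof -
  have "group (A \<times>\<times> B)" by (rule DirProd_group[OF cg_group[OF assms(1)] cg_group[OF assms(2)]])
  then show ?thesis
  proof (rule group.group_comm_groupI)
    fix x y assume xy: "x \<in> carrier (A \<times>\<times> B)" "y \<in> carrier (A \<times>\<times> B)"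
    obtain a b a' b' where e: "x = (a, b)" "y = (a', b')" by (meson prod.exhaust)
    have "a \<otimes>\<^bsub>A\<^esub> a' = a' \<otimes>\<^bsub>A\<^esub> a" using xy e comm_monoid.m_comm[OF comm_group.axioms(1)[OF assms(1)]] by simp
    moreover have "b \<otimes>\<^bsub>B\<^esub> b' = b' \<otimes>\<^bsub>B\<^esub> b" using xy e comm_monoid.m_comm[OF comm_group.axioms(1)[OF assms(2)]] by simp
    ultimately show "x \<otimes>\<^bsub>A \<times>\<times> B\<^esub> y = y \<otimes>\<^bsub>A \<times>\<times> B\<^esub> x" unfolding e by simp
  qed
qed
lemma prod_hom:
  assumes "comm_group K" "h1 \<in> hom A K" "h2 \<in> hom B K"
  shows "(\<lambda>p. h1 (fst p) \<otimes>\<^bsub>K\<^esub> h2 (snd p)) \<in> hom (A \<times>\<times> B) K"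
proof (rule homI)
  interpret comm_group K by fact
  fix x assume "x \<in> carrier (A \<times>\<times> B)"
  then show "h1 (fst x) \<otimes>\<^bsub>K\<^esub> h2 (snd x) \<in> carrier K" using assms hom_in_carrier
    by (metis SigmaE carrier_DirProd fst_conv snd_conv m_closed)
next
  interpret comm_group K by fact
  fix x y assume xy: "x \<in> carrier (A \<times>\<times> B)" "y \<in> carrier (A \<times>\<times> B)"
  obtain a b a' b' where e: "x = (a, b)" "y = (a', b')" by (meson prod.exhaust)
  have ab: "a \<in> carrier A" "b \<in> carrier B" "a' \<in> carrier A" "b' \<in> carrier B" using xy e by auto
  have c: "h1 a \<in> carrier K" "h1 a' \<in> carrier K" "h2 b \<in> carrier K" "h2 b' \<in> carrier K"
    using assms ab hom_in_carrier by metis+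
  have m1: "h1 (a \<otimes>\<^bsub>A\<^esub> a') = h1 a \<otimes>\<^bsub>K\<^esub> h1 a'" using ab assms(2) hom_mult by metis
  have m2: "h2 (b \<otimes>\<^bsub>B\<^esub> b') = h2 b \<otimes>\<^bsub>K\<^esub> h2 b'" using ab assms(3) hom_mult by metis
  show "h1 (fst (x \<otimes>\<^bsub>A \<times>\<times> B\<^esub> y)) \<otimes>\<^bsub>K\<^esub> h2 (snd (x \<otimes>\<^bsub>A \<times>\<times> B\<^esub> y)) =
      (h1 (fst x) \<otimes>\<^bsub>K\<^esub> h2 (snd x)) \<otimes>\<^bsub>K\<^esub> (h1 (fst y) \<otimes>\<^bsub>K\<^esub> h2 (snd y))"
    unfolding e using c by (simp add: m1 m2 m_assoc m_lcomm)
qed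

lemma pair_hom:
  assumes "h1 \<in> hom A B1" "h2 \<in> hom A B2"
  shows "(\<lambda>x. (h1 x, h2 x)) \<in> hom A (B1 \<times>\<times> B2)"
  using assms unfolding hom_def by (auto simp: Pi_def)

lemma const_hom:
  assumes "monoid B" shows "(\<lambda>x. \<one>\<^bsub>B\<^esub>) \<in> hom A B"
  using assms unfolding hom_def by (auto simp: Pi_def monoid.one_closed monoid.l_one)

lemma qs_props:
  assumes "quaternionic_structure G m q z"
  shows "group G" "comm_group G" "m \<in> carrier G"
    "\<And>a. a \<in> carrier G \<Longrightarrow> a \<otimes>\<^bsub>G\<^esub> a = \<one>\<^bsub>G\<^esub>"
    "\<And>a. a \<in> carrier G \<Longrightarrow> q a \<one>\<^bsub>G\<^esub> = z"
    "\<And>a. a \<in> carrier G \<Longrightarrow> q \<one>\<^bsub>G\<^esub> a = z"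
    "\<And>a b. a \<in> carrier G \<Longrightarrow> b \<in> carrier G \<Longrightarrow> q a b = q b a"
proof -
  show g: "group G" and m: "m \<in> carrier G" using assms by (auto simp: quaternionic_structure_def)
  show inv: "\<And>a. a \<in> carrier G \<Longrightarrow> a \<otimes>\<^bsub>G\<^esub> a = \<one>\<^bsub>G\<^esub>" using assms by (auto simp: quaternionic_structure_def)
  show q1: "\<And>a. a \<in> carrier G \<Longrightarrow> q a \<one>\<^bsub>G\<^esub> = z"
  proof -
    fix a assume a: "a \<in> carrier G"
    have "\<one>\<^bsub>G\<^esub> \<in> carrier G" using g by (simp add: group.is_monoid monoid.one_closed)
    then have "q a \<one>\<^bsub>G\<^esub> = q a \<one>\<^bsub>G\<^esub> \<longleftrightarrow> q a (\<one>\<^bsub>G\<^esub> \<otimes>\<^bsub>G\<^esub> \<one>\<^bsub>G\<^esub>) = z"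
      using assms a unfolding quaternionic_structure_def by blast
    then show "q a \<one>\<^bsub>G\<^esub> = z" using g by (simp add: group.is_monoid monoid.l_one)
  qed
  show sym: "\<And>a b. a \<in> carrier G \<Longrightarrow> b \<in> carrier G \<Longrightarrow> q a b = q b a"
    using assms by (auto simp: quaternionic_structure_def)
  show "\<And>a. a \<in> carrier G \<Longrightarrow> q \<one>\<^bsub>G\<^esub> a = z"
    using sym q1 g by (metis group.is_monoid monoid.one_closed)
  show "comm_group G"
  proof (rule group.group_comm_groupI[OF g])
    fix x y assume xy: "x \<in> carrier G" "y \<in> carrier G"
    interpret group G by (rule g)
    have "x \<otimes>\<^bsub>G\<^esub> y = m_inv G (x \<otimes>\<^bsub>G\<^esub> y)" using inv xy by (metis inv_equality m_closed)
    also have "\<dots> = m_inv G y \<otimes>\<^bsub>G\<^esub> m_inv G x" using xy by (simp add: inv_mult_group)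
    also have "m_inv G y = y" using inv xy by (metis inv_equality)
    also have "m_inv G x = x" using inv xy by (metis inv_equality)
    finally show "x \<otimes>\<^bsub>G\<^esub> y = y \<otimes>\<^bsub>G\<^esub> x" .
  qed
qed

lemma pr_z:
  assumes "quaternionic_structure G m q z"
  shows "pr G q (frag_of z) = \<one>\<^bsub>brauer G q\<^esub>"
proof -
  have g: "group G" using qs_props[OF assms] by blast
  interpret group G by (rule g)
  have gB: "group (brauer G q)" using cg_group[OF brauer_comm[OF is_monoid]] .
  have zq: "z = q \<one>\<^bsub>G\<^esub> \<one>\<^bsub>G\<^esub>" using qs_props(5)[OF assms] by simp
  have e: "pr G q (frag_of z) \<otimes>\<^bsub>brauer G q\<^esub> pr G q (frag_of z) = pr G q (frag_of z)"
    using brauer_rel[OF is_monoid, of "\<one>\<^bsub>G\<^esub>" "\<one>\<^bsub>G\<^esub>" "\<one>\<^bsub>G\<^esub>" q] zq by simp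
  have c: "pr G q (frag_of z) \<in> carrier (brauer G q)"
    using hom_in_carrier[OF pr_hom[OF is_monoid]] qset_mem zq by (metis frag_of_in_free_Abelian_group one_closed)
  show ?thesis using e c gB
    using group.l_cancel_one[OF gB c c] by simp
qed

lemma qprod_simp: "qprod_map q q' (a1, a2) (b1, b2) = (q a1 b1, q' a2 b2)"
  by (simp add: qprod_map_def)

lemma frag_hom_emb:
  assumes "\<And>x. x \<in> S \<Longrightarrow> f x \<in> T"
  obtains i where "i \<in> hom (free_Abelian_group S) (free_Abelian_group T)"
    "\<And>x. x \<in> S \<Longrightarrow> i (frag_of x) = frag_of (f x)"
proof -
  have "(\<lambda>x. frag_of (f x)) ` S \<subseteq> carrier (free_Abelian_group T)" using assms by auto
  then show ?thesis using comm_group.free_Abelian_group_universal[OF abelian_free_Abelian_group] that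
    by metis
qed


lemma part_a:
  assumes S: "quaternionic_structure G m q z"
      and S': "quaternionic_structure G' m' q' z'"
  shows "brauer (G \<times>\<times> G') (qprod_map q q') \<cong> brauer G q \<times>\<times> brauer G' q'"
proof -
  note P = qs_props[OF S] and P' = qs_props[OF S']
  interpret g: comm_group G by (rule P(2))
  interpret g': comm_group G' by (rule P'(2))
  let ?P = "G \<times>\<times> G'" and ?qq = "qprod_map q q'"
  let ?H = "brauer G q \<times>\<times> brauer G' q'"
  have gP: "group ?P" using DirProd_group g.is_group g'.is_group by blast
  have mP: "monoid ?P" using gP group.is_monoid by blast
  have cB: "comm_group (brauer G q)" by (rule brauer_comm[OF g.is_monoid])
  have cB': "comm_group (brauer G' q')" by (rule brauer_comm[OF g'.is_monoid])
  have cBP: "comm_group (brauer ?P ?qq)" by (rule brauer_comm[OF mP])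
  have gBP: "group (brauer ?P ?qq)" using cg_group[OF cBP] .
  have cH: "comm_group ?H" by (rule comm_DirProd[OF cB cB'])
  have gH: "group ?H" using cg_group[OF cH] .
  have prh: "pr G q \<in> hom (FQ G q) (brauer G q)" by (rule pr_hom[OF g.is_monoid])
  have prh': "pr G' q' \<in> hom (FQ G' q') (brauer G' q')" by (rule pr_hom[OF g'.is_monoid])
  have prhP: "pr ?P ?qq \<in> hom (FQ ?P ?qq) (brauer ?P ?qq)" by (rule pr_hom[OF mP])
  have z0: "pr G q (frag_of z) = \<one>\<^bsub>brauer G q\<^esub>" by (rule pr_z[OF S])
  have z0': "pr G' q' (frag_of z') = \<one>\<^bsub>brauer G' q'\<^esub>" by (rule pr_z[OF S'])
  have qsetP: "x \<in> qset ?P ?qq \<longleftrightarrow> (\<exists>a1 b1 a2 b2. a1 \<in> carrier G \<and> b1 \<in> carrier G \<and> a2 \<in> carrier G'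
      \<and> b2 \<in> carrier G' \<and> x = (q a1 b1, q' a2 b2))" (is "?L \<longleftrightarrow> ?R") for x
  proof
    assume ?L
    then obtain A B where AB: "A \<in> carrier ?P" "B \<in> carrier ?P" "x = ?qq A B" by (auto simp: qset_def)
    obtain a1 a2 b1 b2 where e: "A = (a1, a2)" "B = (b1, b2)" by (meson prod.exhaust)
    show ?R using AB unfolding e by (auto simp: qprod_simp)
  next
    assume ?R
    then obtain a1 b1 a2 b2 where ab: "a1 \<in> carrier G" "b1 \<in> carrier G" "a2 \<in> carrier G'"
      "b2 \<in> carrier G'" "x = (q a1 b1, q' a2 b2)" by blast
    then show ?L using qset_mem[of "(a1, a2)" ?P "(b1, b2)" ?qq] by (simp add: qprod_simp)
  qed
  have qset1: "x \<in> qset G q \<longleftrightarrow> (\<exists>a b. a \<in> carrier G \<and> b \<in> carrier G \<and> x = q a b)" for x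
    by (auto simp: qset_def)
  have qset2: "x \<in> qset G' q' \<longleftrightarrow> (\<exists>a b. a \<in> carrier G' \<and> b \<in> carrier G' \<and> x = q' a b)" for x
    by (auto simp: qset_def)
  have emb1: "(x, z') \<in> qset ?P ?qq" if "x \<in> qset G q" for x
  proof -
    from that obtain a b where ab: "a \<in> carrier G" "b \<in> carrier G" "x = q a b" unfolding qset1 by blast
    have "?qq (a, \<one>\<^bsub>G'\<^esub>) (b, \<one>\<^bsub>G'\<^esub>) \<in> qset ?P ?qq" by (rule qset_mem) (use ab in auto)
    then show ?thesis using ab P'(5)[of "\<one>\<^bsub>G'\<^esub>"] by (simp add: qprod_simp)
  qed
  have emb2: "(z, x) \<in> qset ?P ?qq" if "x \<in> qset G' q'" for x
  proof -
    from that obtain a b where ab: "a \<in> carrier G'" "b \<in> carrier G'" "x = q' a b" unfolding qset2 by blast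
    have "?qq (\<one>\<^bsub>G\<^esub>, a) (\<one>\<^bsub>G\<^esub>, b) \<in> qset ?P ?qq" by (rule qset_mem) (use ab in auto)
    then show ?thesis using ab P(5)[of "\<one>\<^bsub>G\<^esub>"] by (simp add: qprod_simp)
  qed
  have cFW: True by simp
  define f where "f = (\<lambda>x. (pr G q (frag_of (fst x)), pr G' q' (frag_of (snd x))))"
  have "f ` qset ?P ?qq \<subseteq> carrier ?H"
  proof
    fix y assume "y \<in> f ` qset ?P ?qq"
    then obtain x where x: "x \<in> qset ?P ?qq" "y = f x" by blast
    from x(1) obtain a1 b1 a2 b2 where ab: "a1 \<in> carrier G" "b1 \<in> carrier G" "a2 \<in> carrier G'" "b2 \<in> carrier G'"
      and xe: "x = (q a1 b1, q' a2 b2)" unfolding qsetP by blast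
    have y: "y = f (q a1 b1, q' a2 b2)" using x xe by simp
    have "pr G q (frag_of (q a1 b1)) \<in> carrier (brauer G q)"
      by (rule hom_in_carrier[OF prh]) (simp add: qset_mem ab)
    moreover have "pr G' q' (frag_of (q' a2 b2)) \<in> carrier (brauer G' q')"
      by (rule hom_in_carrier[OF prh']) (simp add: qset_mem ab)
    ultimately show "y \<in> carrier ?H" by (simp add: y f_def)
  qed
  then obtain \<Phi> where Phi: "\<Phi> \<in> hom (FQ ?P ?qq) ?H" "\<And>x. x \<in> qset ?P ?qq \<Longrightarrow> \<Phi> (frag_of x) = f x"
    using comm_group.free_Abelian_group_universal[OF cH] by blast
  obtain i1 where i1: "i1 \<in> hom (FQ G q) (FQ ?P ?qq)" "\<And>x. x \<in> qset G q \<Longrightarrow> i1 (frag_of x) = frag_of (x, z')"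
    by (rule frag_hom_emb[OF emb1]) auto
  obtain i2 where i2: "i2 \<in> hom (FQ G' q') (FQ ?P ?qq)" "\<And>x. x \<in> qset G' q' \<Longrightarrow> i2 (frag_of x) = frag_of (z, x)"
    by (rule frag_hom_emb[OF emb2]) auto
  have rel: "\<Phi> (frag_of (?qq A B)) \<otimes>\<^bsub>?H\<^esub> \<Phi> (frag_of (?qq A C)) = \<Phi> (frag_of (?qq A (B \<otimes>\<^bsub>?P\<^esub> C)))"
    if "A \<in> carrier ?P" "B \<in> carrier ?P" "C \<in> carrier ?P" for A B C
  proof -
    obtain a1 a2 b1 b2 c1 c2 where e: "A = (a1, a2)" "B = (b1, b2)" "C = (c1, c2)" by (meson prod.exhaust)
    have m: "?qq A B \<in> qset ?P ?qq" "?qq A C \<in> qset ?P ?qq" "?qq A (B \<otimes>\<^bsub>?P\<^esub> C) \<in> qset ?P ?qq"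
      using that mP by (auto simp: qset_mem monoid.m_closed)
    show ?thesis using m that unfolding e
      by (simp add: Phi(2) qprod_simp f_def brauer_rel[OF g.is_monoid] brauer_rel[OF g'.is_monoid])
  qed
  have Pi1: "\<Phi> (i1 u) = (pr G q u, \<one>\<^bsub>brauer G' q'\<^esub>)" if "u \<in> carrier (FQ G q)" for u
  proof -
    have h1: "(\<lambda>u. \<Phi> (i1 u)) \<in> hom (FQ G q) ?H" using Group.hom_compose[OF i1(1) Phi(1)] by (simp add: comp_def)
    have h2: "(\<lambda>u. (pr G q u, \<one>\<^bsub>brauer G' q'\<^esub>)) \<in> hom (FQ G q) ?H"
      by (rule pair_hom[OF prh const_hom]) (use cB' in \<open>simp add: cg_group group.is_monoid\<close>)
    show ?thesis
    proof (rule hom_free_ext[OF gH h1 h2 _ that])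
      fix x assume x: "x \<in> qset G q"
      then have "(x, z') \<in> qset ?P ?qq" by (rule emb1)

      then show "\<Phi> (i1 (frag_of x)) = (pr G q (frag_of x), \<one>\<^bsub>brauer G' q'\<^esub>)"
        using x by (simp add: i1(2) Phi(2) f_def z0')
    qed
  qed
  have Pi2: "\<Phi> (i2 u) = (\<one>\<^bsub>brauer G q\<^esub>, pr G' q' u)" if "u \<in> carrier (FQ G' q')" for u
  proof -
    have h1: "(\<lambda>u. \<Phi> (i2 u)) \<in> hom (FQ G' q') ?H" using Group.hom_compose[OF i2(1) Phi(1)] by (simp add: comp_def)
    have h2: "(\<lambda>u. (\<one>\<^bsub>brauer G q\<^esub>, pr G' q' u)) \<in> hom (FQ G' q') ?H"
      by (rule pair_hom[OF const_hom prh']) (use cB in \<open>simp add: cg_group group.is_monoid\<close>)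
    show ?thesis
    proof (rule hom_free_ext[OF gH h1 h2 _ that])
      fix x assume x: "x \<in> qset G' q'"
      then have "(z, x) \<in> qset ?P ?qq" by (rule emb2)

      then show "\<Phi> (i2 (frag_of x)) = (\<one>\<^bsub>brauer G q\<^esub>, pr G' q' (frag_of x))"
        using x by (simp add: i2(2) Phi(2) f_def z0)
    qed
  qed
  have surj: "\<Phi> ` carrier (FQ ?P ?qq) = carrier ?H"
  proof
    show "\<Phi> ` carrier (FQ ?P ?qq) \<subseteq> carrier ?H" by (intro image_subsetI hom_in_carrier[OF Phi(1)])
  next
    show "carrier ?H \<subseteq> \<Phi> ` carrier (FQ ?P ?qq)"
    proof
      fix y assume "y \<in> carrier ?H"
      then obtain u v where uv: "u \<in> carrier (FQ G q)" "v \<in> carrier (FQ G' q')" "y = (pr G q u, pr G' q' v)"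
        by (auto simp: carrier_brauer)
      have c: "i1 u \<in> carrier (FQ ?P ?qq)" "i2 v \<in> carrier (FQ ?P ?qq)"
        by (rule hom_in_carrier[OF i1(1) uv(1)], rule hom_in_carrier[OF i2(1) uv(2)])
      have "\<Phi> (i1 u \<otimes>\<^bsub>FQ ?P ?qq\<^esub> i2 v) = \<Phi> (i1 u) \<otimes>\<^bsub>?H\<^esub> \<Phi> (i2 v)"
        using hom_mult[OF Phi(1) c] .
      also have "\<dots> = y" using uv Pi1 Pi2 hom_in_carrier[OF prh] hom_in_carrier[OF prh'] cB cB'
        by (simp add: cg_group group.is_monoid monoid.l_one monoid.r_one)
      finally show "y \<in> \<Phi> ` carrier (FQ ?P ?qq)" using c
        by (metis abelian_free_Abelian_group cg_group group.is_monoid image_eqI monoid.m_closed)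
    qed
  qed
  obtain \<Theta>1 where T1: "\<Theta>1 \<in> hom (brauer G q) (brauer ?P ?qq)"
      "\<And>x. x \<in> carrier (FQ G q) \<Longrightarrow> \<Theta>1 (pr G q x) = pr ?P ?qq (i1 x)"
  proof (rule induced[OF g.is_monoid gBP])
    show "(\<lambda>x. pr ?P ?qq (i1 x)) \<in> hom (FQ G q) (brauer ?P ?qq)"
      using Group.hom_compose[OF i1(1) prhP] by (simp add: comp_def)
  next
    fix a b c assume abc: "a \<in> carrier G" "b \<in> carrier G" "c \<in> carrier G"
    show "pr ?P ?qq (i1 (frag_of (q a b))) \<otimes>\<^bsub>brauer ?P ?qq\<^esub> pr ?P ?qq (i1 (frag_of (q a c))) =
          pr ?P ?qq (i1 (frag_of (q a (b \<otimes>\<^bsub>G\<^esub> c))))"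
      using brauer_rel[OF mP, of "(a, \<one>\<^bsub>G'\<^esub>)" "(b, \<one>\<^bsub>G'\<^esub>)" "(c, \<one>\<^bsub>G'\<^esub>)" ?qq] abc
      by (simp add: i1(2) qset_mem qprod_simp P'(5))
  qed auto
  obtain \<Theta>2 where T2: "\<Theta>2 \<in> hom (brauer G' q') (brauer ?P ?qq)"
      "\<And>x. x \<in> carrier (FQ G' q') \<Longrightarrow> \<Theta>2 (pr G' q' x) = pr ?P ?qq (i2 x)"
  proof (rule induced[OF g'.is_monoid gBP])
    show "(\<lambda>x. pr ?P ?qq (i2 x)) \<in> hom (FQ G' q') (brauer ?P ?qq)"
      using Group.hom_compose[OF i2(1) prhP] by (simp add: comp_def)
  next
    fix a b c assume abc: "a \<in> carrier G'" "b \<in> carrier G'" "c \<in> carrier G'"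
    show "pr ?P ?qq (i2 (frag_of (q' a b))) \<otimes>\<^bsub>brauer ?P ?qq\<^esub> pr ?P ?qq (i2 (frag_of (q' a c))) =
          pr ?P ?qq (i2 (frag_of (q' a (b \<otimes>\<^bsub>G'\<^esub> c))))"
      using brauer_rel[OF mP, of "(\<one>\<^bsub>G\<^esub>, a)" "(\<one>\<^bsub>G\<^esub>, b)" "(\<one>\<^bsub>G\<^esub>, c)" ?qq] abc
      by (simp add: i2(2) qset_mem qprod_simp P(5))
  qed auto
  define \<Theta> where "\<Theta> = (\<lambda>p. \<Theta>1 (fst p) \<otimes>\<^bsub>brauer ?P ?qq\<^esub> \<Theta>2 (snd p))"
  have Th: "\<Theta> \<in> hom ?H (brauer ?P ?qq)" unfolding \<Theta>_def by (rule prod_hom[OF cBP T1(1) T2(1)])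
  have inv: "\<Theta> (\<Phi> (frag_of x)) = pr ?P ?qq (frag_of x)" if x: "x \<in> qset ?P ?qq" for x
  proof -
    obtain a1 b1 a2 b2 where ab: "a1 \<in> carrier G" "b1 \<in> carrier G" "a2 \<in> carrier G'" "b2 \<in> carrier G'"
      and xe: "x = (q a1 b1, q' a2 b2)" using x unfolding qsetP by blast
    have "\<Theta> (\<Phi> (frag_of x)) = pr ?P ?qq (frag_of (q a1 b1, z')) \<otimes>\<^bsub>brauer ?P ?qq\<^esub> pr ?P ?qq (frag_of (z, q' a2 b2))"
      using x ab unfolding \<Theta>_def by (simp add: Phi(2) f_def xe T1(2) T2(2) i1(2) i2(2) qset_mem)
    also have "\<dots> = pr ?P ?qq (frag_of x)"
      using brauer_rel[OF mP, of "(a1, a2)" "(b1, \<one>\<^bsub>G'\<^esub>)" "(\<one>\<^bsub>G\<^esub>, b2)" ?qq] ab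
      by (simp add: qprod_simp P(5) P'(5) xe)
    finally show ?thesis .
  qed
  show ?thesis by (rule pres_iso[OF mP gH Phi(1) _ surj Th inv])
    (use rel in \<open>auto\<close>)
qed

lemma carrier_C2 [simp]: "carrier C2 = UNIV" by (simp add: C2_def)
lemma mult_C2 [simp]: "x \<otimes>\<^bsub>C2\<^esub> y = (x \<noteq> y)" by (simp add: C2_def)
lemma one_C2 [simp]: "\<one>\<^bsub>C2\<^esub> = False" by (simp add: C2_def)

lemma group_C2: "group C2"
proof (rule groupI)
  fix x :: bool show "\<exists>y\<in>carrier C2. y \<otimes>\<^bsub>C2\<^esub> x = \<one>\<^bsub>C2\<^esub>" by (rule bexI[of _ x]) auto
qed auto

lemma sg_rel:
  assumes "comm_group G" "\<And>x. x \<in> carrier G \<Longrightarrow> x \<otimes>\<^bsub>G\<^esub> x = \<one>\<^bsub>G\<^esub>"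
    "a \<in> carrier G" "b \<in> carrier G" "c \<in> carrier G" "m \<in> carrier G"
  shows "((if al \<and> be then m else \<one>\<^bsub>G\<^esub>) \<otimes>\<^bsub>G\<^esub> ((if be then a else \<one>\<^bsub>G\<^esub>) \<otimes>\<^bsub>G\<^esub> (if al then b else \<one>\<^bsub>G\<^esub>)))
     \<otimes>\<^bsub>G\<^esub> ((if al \<and> ga then m else \<one>\<^bsub>G\<^esub>) \<otimes>\<^bsub>G\<^esub> ((if ga then a else \<one>\<^bsub>G\<^esub>) \<otimes>\<^bsub>G\<^esub> (if al then c else \<one>\<^bsub>G\<^esub>)))
   = (if al \<and> (be \<noteq> ga) then m else \<one>\<^bsub>G\<^esub>) \<otimes>\<^bsub>G\<^esub> ((if be \<noteq> ga then a else \<one>\<^bsub>G\<^esub>) \<otimes>\<^bsub>G\<^esub> (if al then b \<otimes>\<^bsub>G\<^esub> c else \<one>\<^bsub>G\<^esub>))"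
proof -
  interpret comm_group G by fact
  have i2: "\<And>x. x \<in> carrier G \<Longrightarrow> x \<otimes>\<^bsub>G\<^esub> x = \<one>\<^bsub>G\<^esub>" by fact
  have i2': "\<And>x y. x \<in> carrier G \<Longrightarrow> y \<in> carrier G \<Longrightarrow> x \<otimes>\<^bsub>G\<^esub> (x \<otimes>\<^bsub>G\<^esub> y) = y"
    using i2 by (metis m_assoc l_one)
  show ?thesis using assms(3-6)
    by (cases al; cases be; cases ga) (simp_all add: m_ac i2 i2')
qed

lemma part_b:
  fixes G :: "('a, 'm) monoid_scheme" and q :: "'a \<Rightarrow> 'a \<Rightarrow> 'q"
  assumes S: "quaternionic_structure G m q z"
  shows "brauer (G \<times>\<times> C2) (qext_map G m q) \<cong> brauer G q \<times>\<times> G"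
proof -
  note P = qs_props[OF S]
  interpret g: comm_group G by (rule P(2))
  let ?P = "G \<times>\<times> C2" and ?qx = "qext_map G m q"
  let ?H = "brauer G q \<times>\<times> G"
  let ?BP = "brauer ?P ?qx"
  have gP: "group ?P" by (rule DirProd_group[OF g.is_group group_C2])
  have mP: "monoid ?P" using gP group.is_monoid by blast
  have cB: "comm_group (brauer G q)" by (rule brauer_comm[OF g.is_monoid])
  have cBP: "comm_group ?BP" by (rule brauer_comm[OF mP])
  have gBP: "group ?BP" using cg_group[OF cBP] .
  have cH: "comm_group ?H" by (rule comm_DirProd[OF cB P(2)])
  have gH: "group ?H" using cg_group[OF cH] .
  have prh: "pr G q \<in> hom (FQ G q) (brauer G q)" by (rule pr_hom[OF g.is_monoid])
  have prhP: "pr ?P ?qx \<in> hom (FQ ?P ?qx) ?BP" by (rule pr_hom[OF mP])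
  have z0: "pr G q (frag_of z) = \<one>\<^bsub>brauer G q\<^esub>" by (rule pr_z[OF S])
  define s where "s = (\<lambda>a al b be. (if al \<and> be then m else \<one>\<^bsub>G\<^esub>) \<otimes>\<^bsub>G\<^esub>
              ((if be then a else \<one>\<^bsub>G\<^esub>) \<otimes>\<^bsub>G\<^esub> (if al then b else \<one>\<^bsub>G\<^esub>)))"
  have qxs: "?qx (a, al) (b, be) = (q a b, s a al b be)" for a al b be
    by (simp add: qext_map_def s_def)
  have sc: "s a al b be \<in> carrier G" if "a \<in> carrier G" "b \<in> carrier G" for a al b be
    using that P(3) by (simp add: s_def)
  have multP: "(a, al) \<otimes>\<^bsub>?P\<^esub> (b, be) = (a \<otimes>\<^bsub>G\<^esub> b, al \<noteq> be)" for a al b be by simp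
  have qsetP: "x \<in> qset ?P ?qx \<longleftrightarrow> (\<exists>a al b be. a \<in> carrier G \<and> b \<in> carrier G \<and> x = (q a b, s a al b be))"
    (is "?L \<longleftrightarrow> ?R") for x
  proof
    assume ?L
    then obtain A B where AB: "A \<in> carrier ?P" "B \<in> carrier ?P" "x = ?qx A B" by (auto simp: qset_def)
    obtain a al b be where e: "A = (a, al)" "B = (b, be)" by (meson prod.exhaust)
    show ?R using AB unfolding e by (auto simp: qxs)
  next
    assume ?R
    then obtain a al b be where ab: "a \<in> carrier G" "b \<in> carrier G" "x = (q a b, s a al b be)" by blast
    then show ?L using qset_mem[of "(a, al)" ?P "(b, be)" ?qx] by (simp add: qxs)
  qed
  have qset1: "x \<in> qset G q \<longleftrightarrow> (\<exists>a b. a \<in> carrier G \<and> b \<in> carrier G \<and> x = q a b)" for x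
    by (auto simp: qset_def)
  have emb1: "(x, \<one>\<^bsub>G\<^esub>) \<in> qset ?P ?qx" if "x \<in> qset G q" for x
  proof -
    from that obtain a b where ab: "a \<in> carrier G" "b \<in> carrier G" "x = q a b" unfolding qset1 by blast
    have "?qx (a, False) (b, False) \<in> qset ?P ?qx" by (rule qset_mem) (use ab in auto)
    then show ?thesis using ab by (simp add: qxs s_def)
  qed
  have qxE: "?qx (\<one>\<^bsub>G\<^esub>, True) (g, False) = (z, g)" if "g \<in> carrier G" for g
    using that P(6) by (simp add: qxs s_def)
  have embz: "(z, g) \<in> qset ?P ?qx" if "g \<in> carrier G" for g
    using qset_mem[of "(\<one>\<^bsub>G\<^esub>, True)" ?P "(g, False)" ?qx] that qxE[OF that] by simp
  define f where "f = (\<lambda>x::'q \<times> 'a. (pr G q (frag_of (fst x)), snd x))"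
  have "f ` qset ?P ?qx \<subseteq> carrier ?H"
  proof
    fix y assume "y \<in> f ` qset ?P ?qx"
    then obtain x where x: "x \<in> qset ?P ?qx" "y = f x" by blast
    from x(1) obtain a al b be where ab: "a \<in> carrier G" "b \<in> carrier G"
      and xe: "x = (q a b, s a al b be)" unfolding qsetP by blast
    have "pr G q (frag_of (q a b)) \<in> carrier (brauer G q)"
      by (rule hom_in_carrier[OF prh]) (simp add: qset_mem ab)
    then show "y \<in> carrier ?H" using x xe sc[OF ab] by (simp add: f_def)
  qed
  then obtain \<Phi> where Phi: "\<Phi> \<in> hom (FQ ?P ?qx) ?H" "\<And>x. x \<in> qset ?P ?qx \<Longrightarrow> \<Phi> (frag_of x) = f x"
    using comm_group.free_Abelian_group_universal[OF cH] by blast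
  obtain i1 where i1: "i1 \<in> hom (FQ G q) (FQ ?P ?qx)" "\<And>x. x \<in> qset G q \<Longrightarrow> i1 (frag_of x) = frag_of (x, \<one>\<^bsub>G\<^esub>)"
    by (rule frag_hom_emb[OF emb1]) auto
  have rel: "\<Phi> (frag_of (?qx A B)) \<otimes>\<^bsub>?H\<^esub> \<Phi> (frag_of (?qx A C)) = \<Phi> (frag_of (?qx A (B \<otimes>\<^bsub>?P\<^esub> C)))"
    if "A \<in> carrier ?P" "B \<in> carrier ?P" "C \<in> carrier ?P" for A B C
  proof -
    obtain a al b be c ga where e: "A = (a, al)" "B = (b, be)" "C = (c, ga)" by (meson prod.exhaust)
    have abc: "a \<in> carrier G" "b \<in> carrier G" "c \<in> carrier G" using that e by auto
    have m: "?qx A B \<in> qset ?P ?qx" "?qx A C \<in> qset ?P ?qx" "?qx A (B \<otimes>\<^bsub>?P\<^esub> C) \<in> qset ?P ?qx"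
      using that mP by (auto simp: qset_mem monoid.m_closed)
    have "s a al b be \<otimes>\<^bsub>G\<^esub> s a al c ga = s a al (b \<otimes>\<^bsub>G\<^esub> c) (be \<noteq> ga)"
      unfolding s_def by (rule sg_rel[OF P(2) P(4) abc P(3)])
    then show ?thesis using m abc unfolding e
      by (simp add: Phi(2) qxs f_def brauer_rel[OF g.is_monoid])
  qed
  have Pi1: "\<Phi> (i1 u) = (pr G q u, \<one>\<^bsub>G\<^esub>)" if "u \<in> carrier (FQ G q)" for u
  proof -
    have h1: "(\<lambda>u. \<Phi> (i1 u)) \<in> hom (FQ G q) ?H" using Group.hom_compose[OF i1(1) Phi(1)] by (simp add: comp_def)
    have h2: "(\<lambda>u. (pr G q u, \<one>\<^bsub>G\<^esub>)) \<in> hom (FQ G q) ?H"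
      by (rule pair_hom[OF prh const_hom]) (rule g.is_monoid)
    show ?thesis
    proof (rule hom_free_ext[OF gH h1 h2 _ that])
      fix x assume x: "x \<in> qset G q"
      then show "\<Phi> (i1 (frag_of x)) = (pr G q (frag_of x), \<one>\<^bsub>G\<^esub>)"
        using emb1[OF x] by (simp add: i1(2) Phi(2) f_def)
    qed
  qed
  have surj: "\<Phi> ` carrier (FQ ?P ?qx) = carrier ?H"
  proof
    show "\<Phi> ` carrier (FQ ?P ?qx) \<subseteq> carrier ?H" by (intro image_subsetI hom_in_carrier[OF Phi(1)])
  next
    show "carrier ?H \<subseteq> \<Phi> ` carrier (FQ ?P ?qx)"
    proof
      fix y assume "y \<in> carrier ?H"
      then obtain u g where ug: "u \<in> carrier (FQ G q)" "g \<in> carrier G" "y = (pr G q u, g)"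
        by (auto simp: carrier_brauer)
      have c: "i1 u \<in> carrier (FQ ?P ?qx)" "frag_of (z, g) \<in> carrier (FQ ?P ?qx)"
        by (rule hom_in_carrier[OF i1(1) ug(1)]) (simp add: embz[OF ug(2)])
      have "\<Phi> (i1 u \<otimes>\<^bsub>FQ ?P ?qx\<^esub> frag_of (z, g)) = \<Phi> (i1 u) \<otimes>\<^bsub>?H\<^esub> \<Phi> (frag_of (z, g))"
        using hom_mult[OF Phi(1) c] .
      also have "\<dots> = y" using ug Pi1 hom_in_carrier[OF prh] cB embz[OF ug(2)]
        by (simp add: Phi(2) f_def z0 cg_group group.is_monoid monoid.r_one)
      finally show "y \<in> \<Phi> ` carrier (FQ ?P ?qx)" using c
        by (metis abelian_free_Abelian_group cg_group group.is_monoid image_eqI monoid.m_closed)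
    qed
  qed
  define R where "R = (\<lambda>A B. pr ?P ?qx (frag_of (?qx A B)))"
  have Rrel: "R A B \<otimes>\<^bsub>?BP\<^esub> R A C = R A (B \<otimes>\<^bsub>?P\<^esub> C)"
    if "A \<in> carrier ?P" "B \<in> carrier ?P" "C \<in> carrier ?P" for A B C
    unfolding R_def using that by (rule brauer_rel[OF mP])
  have Rc: "R A B \<in> carrier ?BP" if "A \<in> carrier ?P" "B \<in> carrier ?P" for A B
    unfolding R_def by (rule hom_in_carrier[OF prhP]) (simp add: qset_mem[OF that])
  have Rsym: "R (a, al) (b, be) = R (b, be) (a, al)" if "a \<in> carrier G" "b \<in> carrier G" for a al b be
    unfolding R_def using that P(7)[OF that] by (simp add: qxs s_def g.m_comm conj_commute)
  define E where "E = (\<lambda>g. pr ?P ?qx (frag_of (z, g)))"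
  have ER: "E g = R (\<one>\<^bsub>G\<^esub>, True) (g, False)" if "g \<in> carrier G" for g
    unfolding E_def R_def using qxE[OF that] by simp
  have Eh: "E \<in> hom G ?BP"
  proof (rule homI)
    fix g assume "g \<in> carrier G" then show "E g \<in> carrier ?BP" using ER Rc by simp
  next
    fix g h assume gh: "g \<in> carrier G" "h \<in> carrier G"
    show "E (g \<otimes>\<^bsub>G\<^esub> h) = E g \<otimes>\<^bsub>?BP\<^esub> E h"
      using gh Rrel[of "(\<one>\<^bsub>G\<^esub>, True)" "(g, False)" "(h, False)"] by (simp add: ER)
  qed
  obtain \<Theta>1 where T1: "\<Theta>1 \<in> hom (brauer G q) ?BP"
      "\<And>x. x \<in> carrier (FQ G q) \<Longrightarrow> \<Theta>1 (pr G q x) = pr ?P ?qx (i1 x)"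
  proof (rule induced[OF g.is_monoid gBP])
    show "(\<lambda>x. pr ?P ?qx (i1 x)) \<in> hom (FQ G q) ?BP"
      using Group.hom_compose[OF i1(1) prhP] by (simp add: comp_def)
  next
    fix a b c assume abc: "a \<in> carrier G" "b \<in> carrier G" "c \<in> carrier G"
    show "pr ?P ?qx (i1 (frag_of (q a b))) \<otimes>\<^bsub>?BP\<^esub> pr ?P ?qx (i1 (frag_of (q a c))) =
          pr ?P ?qx (i1 (frag_of (q a (b \<otimes>\<^bsub>G\<^esub> c))))"
      using brauer_rel[OF mP, of "(a, False)" "(b, False)" "(c, False)" ?qx] abc
      by (simp add: i1(2) qset_mem qxs s_def)
  qed auto
  define \<Theta> where "\<Theta> = (\<lambda>p. \<Theta>1 (fst p) \<otimes>\<^bsub>?BP\<^esub> E (snd p))"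
  have Th: "\<Theta> \<in> hom ?H ?BP" unfolding \<Theta>_def by (rule prod_hom[OF cBP T1(1) Eh])
  have inv: "\<Theta> (\<Phi> (frag_of x)) = pr ?P ?qx (frag_of x)" if x: "x \<in> qset ?P ?qx" for x
  proof -
    obtain a al b be where ab: "a \<in> carrier G" "b \<in> carrier G"
      and xe: "x = (q a b, s a al b be)" using x unfolding qsetP by blast
    have one: "\<one>\<^bsub>G\<^esub> \<in> carrier G" by simp
    have D: "pr ?P ?qx (i1 (frag_of (q a b))) = R (a, False) (b, False)"
      unfolding R_def using ab by (simp add: i1(2) qset_mem qxs s_def)
    have "\<Theta> (\<Phi> (frag_of x)) = R (a, False) (b, False) \<otimes>\<^bsub>?BP\<^esub> E (s a al b be)"
      using x ab unfolding \<Theta>_def by (simp add: Phi(2) f_def xe T1(2) qset_mem D)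
    also have "\<dots> = R (a, al) (b, be)"
    proof -
      have cG: "comm_group ?BP" by (rule cBP)
      have RaT: "R (a, True) (b, False) = R (a, False) (b, False) \<otimes>\<^bsub>?BP\<^esub> E b"
      proof -
        have "R (a, True) (b, False) = R (b, False) ((a, False) \<otimes>\<^bsub>?P\<^esub> (\<one>\<^bsub>G\<^esub>, True))"
          using Rsym ab by simp
        also have "\<dots> = R (b, False) (a, False) \<otimes>\<^bsub>?BP\<^esub> R (b, False) (\<one>\<^bsub>G\<^esub>, True)"
          using Rrel ab by simp
        finally show ?thesis using Rsym ab ER by simp
      qed
      show ?thesis
      proof (cases al; cases be)
        assume "\<not> al" "\<not> be"
        then have "s a al b be = \<one>\<^bsub>G\<^esub>" by (simp add: s_def)
        then show ?thesis using \<open>\<not> al\<close> \<open>\<not> be\<close> hom_one[OF Eh] Rc[of "(a, False)" "(b, False)"] ab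
          by (simp add: gBP g.is_group monoid.r_one group.is_monoid)
      next
        assume "al" "\<not> be"
        then have "s a al b be = b" using ab by (simp add: s_def)
        then show ?thesis using \<open>al\<close> \<open>\<not> be\<close> RaT by simp
      next
        assume "\<not> al" "be"
        then have "s a al b be = a" using ab by (simp add: s_def)
        have "R (a, False) (b, True) = R (a, False) ((b, False) \<otimes>\<^bsub>?P\<^esub> (\<one>\<^bsub>G\<^esub>, True))"
          using ab by simp
        also have "\<dots> = R (a, False) (b, False) \<otimes>\<^bsub>?BP\<^esub> R (a, False) (\<one>\<^bsub>G\<^esub>, True)"
          using Rrel ab by simp
        also have "R (a, False) (\<one>\<^bsub>G\<^esub>, True) = E a" using Rsym ab ER by simp
        finally show ?thesis using \<open>\<not> al\<close> \<open>be\<close> \<open>s a al b be = a\<close> by simp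
      next
        assume "al" "be"
        then have sv: "s a al b be = m \<otimes>\<^bsub>G\<^esub> (a \<otimes>\<^bsub>G\<^esub> b)" using ab by (simp add: s_def)
        have "R (a, True) (b, True) = R (a, True) ((b, False) \<otimes>\<^bsub>?P\<^esub> (\<one>\<^bsub>G\<^esub>, True))"
          using ab by simp
        also have "\<dots> = R (a, True) (b, False) \<otimes>\<^bsub>?BP\<^esub> R (a, True) (\<one>\<^bsub>G\<^esub>, True)"
          using Rrel ab by simp
        also have "R (a, True) (\<one>\<^bsub>G\<^esub>, True) = E (m \<otimes>\<^bsub>G\<^esub> a)"
          unfolding R_def E_def using ab P(3) P(5) by (simp add: qxs s_def)
        also note RaT
        also have "(R (a, False) (b, False) \<otimes>\<^bsub>?BP\<^esub> E b) \<otimes>\<^bsub>?BP\<^esub> E (m \<otimes>\<^bsub>G\<^esub> a)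
            = R (a, False) (b, False) \<otimes>\<^bsub>?BP\<^esub> E (b \<otimes>\<^bsub>G\<^esub> (m \<otimes>\<^bsub>G\<^esub> a))"
        proof -
          have mB: "monoid ?BP" using gBP group.is_monoid by blast
          have cR: "R (a, False) (b, False) \<in> carrier ?BP" using Rc ab by simp
          have cEb: "E b \<in> carrier ?BP" by (rule hom_in_carrier[OF Eh]) (use ab in auto)
          have cEma: "E (m \<otimes>\<^bsub>G\<^esub> a) \<in> carrier ?BP" by (rule hom_in_carrier[OF Eh]) (use ab P(3) in auto)
          have "E (b \<otimes>\<^bsub>G\<^esub> (m \<otimes>\<^bsub>G\<^esub> a)) = E b \<otimes>\<^bsub>?BP\<^esub> E (m \<otimes>\<^bsub>G\<^esub> a)"
            by (rule hom_mult[OF Eh]) (use ab P(3) in auto)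
          then show ?thesis using monoid.m_assoc[OF mB cR cEb cEma] by simp
        qed
        also have "b \<otimes>\<^bsub>G\<^esub> (m \<otimes>\<^bsub>G\<^esub> a) = m \<otimes>\<^bsub>G\<^esub> (a \<otimes>\<^bsub>G\<^esub> b)"
          using ab P(3) by (simp add: g.m_ac)
        finally show ?thesis using \<open>al\<close> \<open>be\<close> sv by simp
      qed
    qed
    also have "\<dots> = pr ?P ?qx (frag_of x)" unfolding R_def by (simp add: qxs xe)
    finally show ?thesis .
  qed
  show ?thesis by (rule pres_iso[OF mP gH Phi(1) _ surj Th inv])
    (use rel in \<open>auto\<close>)
qed


theorem proposition4:
  fixes G :: "('a, 'm) monoid_scheme" and m :: 'a and q :: "'a \<Rightarrow> 'a \<Rightarrow> 'q" and z :: 'q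
    and G' :: "('b, 'n) monoid_scheme" and m' :: 'b and q' :: "'b \<Rightarrow> 'b \<Rightarrow> 'r" and z' :: 'r
  assumes "quaternionic_structure G m q z"
      and "quaternionic_structure G' m' q' z'"
  shows "brauer (G \<times>\<times> G') (qprod_map q q') \<cong> brauer G q \<times>\<times> brauer G' q'
       \<and> brauer (G \<times>\<times> C2) (qext_map G m q) \<cong> brauer G q \<times>\<times> G"
  using part_a[OF assms] part_b[OF assms(1)] by blast

end
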